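(* Let $X$ be a real Hilbert space, let $A,B\colon X\rightrightarrows X$ be set-valued operators, let $C\colon X\to X$ be a single-valued operator, let $\eta,\gamma,\delta>0$, and set $\lambda:=1+\frac{\delta}{\gamma}$. Define the (possibly set-valued) operator $$T_{A,B,C}:=\mathrm{Id}-\eta J_{\gamma A}+\eta J_{\delta B}\big((1-\lambda)\mathrm{Id}+\lambda J_{\gamma A}-\delta C J_{\gamma A}\big),$$ i.e. $T_{A,B,C}x=\{x-\eta a+\eta b:\ a\in J_{\gamma A}x,\ b\in J_{\delta B}((1-\lambda)x+\lambda a-\delta Ca)\}$. Then $\operatorname{Fix}T_{A,B,C}\neq\varnothing$ if and only if $\operatorname{zer}(A+B+C)\neq\varnothing$. Moreover, if $J_{\gamma A}$ is single-valued, then $J_{\gamma A}(\operatorname{Fix}T_{A,B,C})=\operatorname{zer}(A+B+C)$.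
   Context: For a set-valued operator $A\colon X\rightrightarrows X$: the resolvent is $J_A:=(\mathrm{Id}+A)^{-1}$ (inverse in the sense of graphs); $\operatorname{zer}A:=\{x: 0\in Ax\}$; for a (possibly set-valued) operator $T$, $\operatorname{Fix}T:=\{x: x\in Tx\}$. *)

theory Defs
  imports "HOL-Analysis.Analysis"
begin

definition scale_op :: "real \<Rightarrow> ('a::real_vector \<Rightarrow> 'a set) \<Rightarrow> 'a \<Rightarrow> 'a set" where
  "scale_op c A = (\<lambda>x. (\<lambda>u. c *\<^sub>R u) ` A x)"

definition resolvent :: "('a::real_vector \<Rightarrow> 'a set) \<Rightarrow> 'a \<Rightarrow> 'a set" where
  "resolvent A x = {a. \<exists>u\<in>A a. x = a + u}"

definition zer :: "('a::real_vector \<Rightarrow> 'a set) \<Rightarrow> 'a set" where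
  "zer A = {x. 0 \<in> A x}"

definition Fix :: "('a \<Rightarrow> 'a set) \<Rightarrow> 'a set" where
  "Fix T = {x. x \<in> T x}"

definition sum3_op :: "('a::real_vector \<Rightarrow> 'a set) \<Rightarrow> ('a \<Rightarrow> 'a set) \<Rightarrow> ('a \<Rightarrow> 'a) \<Rightarrow> 'a \<Rightarrow> 'a set" where
  "sum3_op A B C = (\<lambda>x. {a + b + C x | a b. a \<in> A x \<and> b \<in> B x})"

definition T_op :: "real \<Rightarrow> real \<Rightarrow> real \<Rightarrow> ('a::real_vector \<Rightarrow> 'a set) \<Rightarrow> ('a \<Rightarrow> 'a set) \<Rightarrow> ('a \<Rightarrow> 'a) \<Rightarrow> 'a \<Rightarrow> 'a set" where
  "T_op \<eta> \<gamma> \<delta> A B C = (\<lambda>x. let lam = 1 + \<delta> / \<gamma> in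
     {x - \<eta> *\<^sub>R a + \<eta> *\<^sub>R b | a b. a \<in> resolvent (scale_op \<gamma> A) x \<and>
        b \<in> resolvent (scale_op \<delta> B) ((1 - lam) *\<^sub>R x + lam *\<^sub>R a - \<delta> *\<^sub>R C a)})"

definition single_valued_op :: "('a \<Rightarrow> 'b set) \<Rightarrow> bool" where
  "single_valued_op J \<longleftrightarrow> (\<forall>x. \<forall>u\<in>J x. \<forall>v\<in>J x. u = v)"

end

theory Submission
  imports Defs
begin

lemma res_scale: "a \<in> resolvent (scale_op c A) x \<longleftrightarrow> (\<exists>u\<in>A a. x = a + c *\<^sub>R u)"
  by (auto simp: resolvent_def scale_op_def)

lemma fix_to_zer:
  fixes A B :: "'a::real_vector \<Rightarrow> 'a set"
  assumes "\<eta> > 0" "\<gamma> > 0" "\<delta> > 0" "x \<in> Fix (T_op \<eta> \<gamma> \<delta> A B C)"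
  shows "\<exists>a. a \<in> resolvent (scale_op \<gamma> A) x \<and> a \<in> zer (sum3_op A B C)"
proof -
  define lam where "lam = 1 + \<delta> / \<gamma>"
  from assms(4) obtain a b where x: "x = x - \<eta> *\<^sub>R a + \<eta> *\<^sub>R b"
    and a: "a \<in> resolvent (scale_op \<gamma> A) x"
    and b: "b \<in> resolvent (scale_op \<delta> B) ((1 - lam) *\<^sub>R x + lam *\<^sub>R a - \<delta> *\<^sub>R C a)"
    by (auto simp: Fix_def T_op_def lam_def Let_def)
  from x have "\<eta> *\<^sub>R a = \<eta> *\<^sub>R b" by (simp add: algebra_simps)
  hence ab: "a = b" using assms(1) by simp
  from a obtain u where u: "u \<in> A a" "x = a + \<gamma> *\<^sub>R u" by (auto simp: res_scale)
  from b ab obtain v where v: "v \<in> B a"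
    "(1 - lam) *\<^sub>R x + lam *\<^sub>R a - \<delta> *\<^sub>R C a = a + \<delta> *\<^sub>R v" by (auto simp: res_scale)
  have "(1 - lam) *\<^sub>R x + lam *\<^sub>R a = a - \<delta> *\<^sub>R u"
    using assms(2) unfolding u(2) lam_def by (simp add: algebra_simps)
  with v(2) have "\<delta> *\<^sub>R (u + v + C a) = 0" by (simp add: algebra_simps)
  hence "u + v + C a = 0" using assms(3) by simp
  hence "a \<in> zer (sum3_op A B C)" using u(1) v(1) unfolding zer_def sum3_op_def by force
  with a show ?thesis by blast
qed

lemma zer_to_fix:
  fixes A B :: "'a::real_vector \<Rightarrow> 'a set"
  assumes "\<eta> > 0" "\<gamma> > 0" "\<delta> > 0" "z \<in> zer (sum3_op A B C)"
  shows "\<exists>x. x \<in> Fix (T_op \<eta> \<gamma> \<delta> A B C) \<and> z \<in> resolvent (scale_op \<gamma> A) x"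
proof -
  define lam where "lam = 1 + \<delta> / \<gamma>"
  from assms(4) obtain u v where uv: "u \<in> A z" "v \<in> B z" "0 = u + v + C z"
    by (auto simp: zer_def sum3_op_def)
  define x where "x = z + \<gamma> *\<^sub>R u"
  have a: "z \<in> resolvent (scale_op \<gamma> A) x" using uv(1) by (auto simp: res_scale x_def)
  have "(1 - lam) *\<^sub>R x + lam *\<^sub>R z = z - \<delta> *\<^sub>R u"
    using assms(2) unfolding x_def lam_def by (simp add: algebra_simps)
  hence "(1 - lam) *\<^sub>R x + lam *\<^sub>R z - \<delta> *\<^sub>R C z = z + \<delta> *\<^sub>R v"
  proof -
    assume h: "(1 - lam) *\<^sub>R x + lam *\<^sub>R z = z - \<delta> *\<^sub>R u"
    have "C z = - u - v" using uv(3) by (simp add: algebra_simps eq_neg_iff_add_eq_0)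
    hence "(1 - lam) *\<^sub>R x + lam *\<^sub>R z - \<delta> *\<^sub>R C z = (z - \<delta> *\<^sub>R u) - \<delta> *\<^sub>R (- u - v)"
      using h by simp
    thus ?thesis by (simp add: algebra_simps)
  qed
  hence b: "z \<in> resolvent (scale_op \<delta> B) ((1 - lam) *\<^sub>R x + lam *\<^sub>R z - \<delta> *\<^sub>R C z)"
    using uv(2) by (auto simp: res_scale)
  have "x \<in> Fix (T_op \<eta> \<gamma> \<delta> A B C)"
    unfolding Fix_def T_op_def Let_def lam_def[symmetric] using a b
    by (auto intro!: exI[of _ z])
  with a show ?thesis by blast
qed

theorem proposition2p1:
  fixes A B :: "'a::{real_inner, complete_space} \<Rightarrow> 'a set"
    and C :: "'a \<Rightarrow> 'a"
    and \<eta> \<gamma> \<delta> :: real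
  assumes "\<eta> > 0" and "\<gamma> > 0" and "\<delta> > 0"
  shows "(Fix (T_op \<eta> \<gamma> \<delta> A B C) \<noteq> {} \<longleftrightarrow> zer (sum3_op A B C) \<noteq> {})
    \<and> (single_valued_op (resolvent (scale_op \<gamma> A)) \<longrightarrow>
        (\<Union>x\<in>Fix (T_op \<eta> \<gamma> \<delta> A B C). resolvent (scale_op \<gamma> A) x) = zer (sum3_op A B C))"
proof (intro conjI impI)
  show "(Fix (T_op \<eta> \<gamma> \<delta> A B C) \<noteq> {} \<longleftrightarrow> zer (sum3_op A B C) \<noteq> {})"
    using fix_to_zer[OF assms] zer_to_fix[OF assms] by blast
  assume sv: "single_valued_op (resolvent (scale_op \<gamma> A))"
  show "(\<Union>x\<in>Fix (T_op \<eta> \<gamma> \<delta> A B C). resolvent (scale_op \<gamma> A) x) = zer (sum3_op A B C)"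
  proof
    show "(\<Union>x\<in>Fix (T_op \<eta> \<gamma> \<delta> A B C). resolvent (scale_op \<gamma> A) x) \<subseteq> zer (sum3_op A B C)"
    proof
      fix a assume "a \<in> (\<Union>x\<in>Fix (T_op \<eta> \<gamma> \<delta> A B C). resolvent (scale_op \<gamma> A) x)"
      then obtain x where x: "x \<in> Fix (T_op \<eta> \<gamma> \<delta> A B C)" "a \<in> resolvent (scale_op \<gamma> A) x" by blast
      from fix_to_zer[OF assms x(1)] obtain a' where
        "a' \<in> resolvent (scale_op \<gamma> A) x" "a' \<in> zer (sum3_op A B C)" by blast
      with x(2) sv show "a \<in> zer (sum3_op A B C)" unfolding single_valued_op_def by metis
    qed
    show "zer (sum3_op A B C) \<subseteq> (\<Union>x\<in>Fix (T_op \<eta> \<gamma> \<delta> A B C). resolvent (scale_op \<gamma> A) x)"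
      using zer_to_fix[OF assms] by blast
  qed
qed

end
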